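(* For every $n\geq 1$ and $a_1,\ldots,a_n\in A$, \[\sum_{k=0}^n(-1)^k\,S^t(a_1\cdots a_k)*S^{1-t}(a_n a_{n-1}\cdots a_{k+1})=0\] in $\mathfrak{h}^1[t]$ (empty products being the empty word $1$).
   Context: Let $\mathfrak{A}$ be a commutative $\mathbb{Q}$-algebra, $A$ a set of letters, and $\mathfrak{h}^1$ the non-commutative polynomial algebra over $\mathfrak{A}$ in the letters of $A$ (the free $\mathfrak{A}$-module on words, i.e. finite sequences of letters including the empty word $1$, with concatenation product). Let $\mathfrak{z}\subset\mathfrak{h}^1$ be the $\mathfrak{A}$-submodule spanned by $A$, and assume $\mathfrak{z}$ carries a commutative associative (not necessarily unital) $\mathfrak{A}$-bilinear product $\circ\colon\mathfrak{z}\times\mathfrak{z}\to\mathfrak{z}$. This is extended to an action of $\mathfrak{z}$ on $\mathfrak{h}^1$ by $a\circ 1=0$ and $a\circ(bw)=(a\circ b)w$ for $a,b\in A$ and words $w$, extended $\mathfrak{A}$-bilinearly. Let $t$ be an indeterminate, $\mathfrak{h}^1[t]=\mathfrak{h}^1\otimes_{\mathbb{Q}}\mathbb{Q}[t]$, with all structures extended $\mathfrak{A}[t]$-linearly. Define the $\mathfrak{A}[t]$-linear operator $S^t$ on $\mathfrak{h}^1[t]$ by $S^t(1)=1$ and $S^t(aw)=aS^t(w)+t\,a\circ S^t(w)$ for $a\in A$ and words $w$; $S^{1-t}$ is obtained by substituting $1-t$ for $t$. The harmonic product $*$ is the $\mathfrak{A}[t]$-bilinear product on $\mathfrak{h}^1[t]$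 given by $1*w=w*1=w$ and $(aw)*(bw')=a(w*bw')+b(aw*w')+(a\circ b)(w*w')$ for $a,b\in A$ and words $w,w'$. *)

theory Defs
  imports "HOL-Library.Poly_Mapping" "HOL-Computational_Algebra.Polynomial"
begin

text \<open>Words over the alphabet 'a are lists; the algebra
h^1[t] over A[t] is (finitely supported maps from words to 'r poly).\<close>

definition smul :: "'v::comm_ring_1 \<Rightarrow> ('k \<Rightarrow>\<^sub>0 'v) \<Rightarrow> ('k \<Rightarrow>\<^sub>0 'v)" where
  "smul c x = Poly_Mapping.map (\<lambda>v. c * v) x"

definition lin :: "('k \<Rightarrow> ('m \<Rightarrow>\<^sub>0 'v::comm_ring_1)) \<Rightarrow> ('k \<Rightarrow>\<^sub>0 'v) \<Rightarrow> ('m \<Rightarrow>\<^sub>0 'v)" where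
  "lin f x = (\<Sum>k\<in>Poly_Mapping.keys x. smul (Poly_Mapping.lookup x k) (f k))"

text \<open>The product \<circ> on z is given by structure constants: circ a b \<in> z for letters a b.\<close>
fun circ_word :: "('a \<Rightarrow> 'a \<Rightarrow> ('a \<Rightarrow>\<^sub>0 'r::comm_ring_1)) \<Rightarrow> 'a \<Rightarrow> 'a list \<Rightarrow> ('a list \<Rightarrow>\<^sub>0 'r poly)" where
  "circ_word c a [] = 0"
| "circ_word c a (b # w) = (\<Sum>d\<in>Poly_Mapping.keys (c a b). Poly_Mapping.single (d # w) [:Poly_Mapping.lookup (c a b) d:])"

definition lcons :: "'a \<Rightarrow> ('a list \<Rightarrow>\<^sub>0 'r::comm_ring_1 poly) \<Rightarrow> ('a list \<Rightarrow>\<^sub>0 'r poly)" where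
  "lcons a x = lin (\<lambda>w. Poly_Mapping.single (a # w) 1) x"

text \<open>S^s on words, for a scalar s \<in> A[t]: S^s(1) = 1, S^s(a w) = a S^s(w) + s (a \<circ> S^s(w)).
S^t is Sop c [:0,1:] and S^(1-t) is Sop c [:1,-1:].\<close>
fun Sop :: "('a \<Rightarrow> 'a \<Rightarrow> ('a \<Rightarrow>\<^sub>0 'r::comm_ring_1)) \<Rightarrow> 'r poly \<Rightarrow> 'a list \<Rightarrow> ('a list \<Rightarrow>\<^sub>0 'r poly)" where
  "Sop c s [] = Poly_Mapping.single [] 1"
| "Sop c s (a # w) = lcons a (Sop c s w) + smul s (lin (circ_word c a) (Sop c s w))"

fun harm_word :: "('a \<Rightarrow> 'a \<Rightarrow> ('a \<Rightarrow>\<^sub>0 'r::comm_ring_1)) \<Rightarrow> 'a list \<Rightarrow> 'a list \<Rightarrow> ('a list \<Rightarrow>\<^sub>0 'r poly)" where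
  "harm_word c [] w = Poly_Mapping.single w 1"
| "harm_word c (a # v) [] = Poly_Mapping.single (a # v) 1"
| "harm_word c (a # v) (b # w) =
     lcons a (harm_word c v (b # w)) + lcons b (harm_word c (a # v) w)
     + (\<Sum>d\<in>Poly_Mapping.keys (c a b). smul [:Poly_Mapping.lookup (c a b) d:] (lcons d (harm_word c v w)))"

definition harm :: "('a \<Rightarrow> 'a \<Rightarrow> ('a \<Rightarrow>\<^sub>0 'r::comm_ring_1)) \<Rightarrow> ('a list \<Rightarrow>\<^sub>0 'r poly) \<Rightarrow> ('a list \<Rightarrow>\<^sub>0 'r poly) \<Rightarrow> ('a list \<Rightarrow>\<^sub>0 'r poly)" where
  "harm c x y = lin (\<lambda>v. lin (\<lambda>w. harm_word c v w) y) x"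

end

theory Submission
  imports Defs
begin


lemma lookup_smul[simp]: "Poly_Mapping.lookup (smul c x) k = c * Poly_Mapping.lookup x k"
  unfolding smul_def by (simp add: map.rep_eq when_def)

lemma smul_zero[simp]: "smul c 0 = 0"
  by (rule poly_mapping_eqI) simp
lemma smul_zero_left[simp]: "smul 0 x = 0"
  by (rule poly_mapping_eqI) simp
lemma smul_one[simp]: "smul 1 x = x"
  by (rule poly_mapping_eqI) simp
lemma smul_add: "smul c (x + y) = smul c x + smul c y"
  by (rule poly_mapping_eqI) (simp add: lookup_add algebra_simps)
lemma smul_add_left: "smul (a + b) x = smul a x + smul b x"
  by (rule poly_mapping_eqI) (simp add: lookup_add algebra_simps)
lemma smul_smul[simp]: "smul a (smul b x) = smul (a * b) x"
  by (rule poly_mapping_eqI) (simp add: algebra_simps)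
lemma smul_sum: "smul c (sum f S) = (\<Sum>i\<in>S. smul c (f i))"
  by (rule poly_mapping_eqI) (simp add: lookup_sum sum_distrib_left)
lemma smul_sum_left: "smul (sum f S) x = (\<Sum>i\<in>S. smul (f i) x)"
  by (rule poly_mapping_eqI) (simp add: lookup_sum sum_distrib_right)
lemma smul_single: "smul c (Poly_Mapping.single k v) = Poly_Mapping.single k (c * v)"
  by (rule poly_mapping_eqI) (simp add: lookup_single when_def)

lemma lin_superset:
  assumes "finite S" "Poly_Mapping.keys x \<subseteq> S"
  shows "lin f x = (\<Sum>k\<in>S. smul (Poly_Mapping.lookup x k) (f k))"
  unfolding lin_def
  by (rule sum.mono_neutral_left) (use assms in \<open>auto simp: in_keys_iff\<close>)

lemma lin_zero[simp]: "lin f 0 = 0"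
  by (simp add: lin_def)

lemma lin_add: "lin f (x + y) = lin f x + lin f y"
proof -
  let ?S = "Poly_Mapping.keys x \<union> Poly_Mapping.keys y"
  have "lin f (x + y) = (\<Sum>k\<in>?S. smul (Poly_Mapping.lookup (x+y) k) (f k))"
    by (rule lin_superset) (auto dest: keys_add[THEN subsetD])
  also have "\<dots> = (\<Sum>k\<in>?S. smul (Poly_Mapping.lookup x k) (f k)) + (\<Sum>k\<in>?S. smul (Poly_Mapping.lookup y k) (f k))"
    by (simp add: lookup_add smul_add_left sum.distrib)
  also have "\<dots> = lin f x + lin f y"
    by (simp add: lin_superset[symmetric])
  finally show ?thesis .
qed

lemma lin_smul: "lin f (smul c x) = smul c (lin f x)"
proof -
  have "lin f (smul c x) = (\<Sum>k\<in>Poly_Mapping.keys x. smul (Poly_Mapping.lookup (smul c x) k) (f k))"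
    by (rule lin_superset) (auto simp: in_keys_iff)
  thus ?thesis by (simp add: lin_def smul_sum)
qed

lemma lin_single: "lin f (Poly_Mapping.single k v) = smul v (f k)"
  by (subst lin_superset[of "{k}"]) (auto simp: lookup_single)

lemma lin_sum: "lin f (sum g S) = (\<Sum>i\<in>S. lin f (g i))"
  by (induction S rule: infinite_finite_induct) (auto simp: lin_add)

lemma lin_fadd: "lin (\<lambda>k. f k + g k) x = lin f x + lin g x"
  by (simp add: lin_def smul_add sum.distrib)

lemma lin_fsmul: "lin (\<lambda>k. smul c (f k)) x = smul c (lin f x)"
  by (simp add: lin_def smul_sum mult.commute)

lemma lin_fsum: "lin (\<lambda>k. \<Sum>i\<in>S. f i k) x = (\<Sum>i\<in>S. lin (f i) x)"
  by (simp add: lin_def smul_sum sum.swap[of _ S])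

lemma lin_fzero[simp]: "lin (\<lambda>k. 0) x = 0"
  by (simp add: lin_def)

lemma lin_id: "lin (\<lambda>k. Poly_Mapping.single k 1) x = x"
  by (rule poly_mapping_eqI) (simp add: lin_def smul_single lookup_sum lookup_single when_def in_keys_iff)

definition lina :: "(('k \<Rightarrow>\<^sub>0 'v::comm_ring_1) \<Rightarrow> ('m \<Rightarrow>\<^sub>0 'v)) \<Rightarrow> bool" where
  "lina L \<longleftrightarrow> (\<forall>x y. L (x + y) = L x + L y) \<and> (\<forall>c x. L (smul c x) = smul c (L x))"

lemma lina_zero: "lina L \<Longrightarrow> L 0 = 0"
  unfolding lina_def by (metis smul_zero_left)

lemma lina_sum: "lina L \<Longrightarrow> L (sum f S) = (\<Sum>i\<in>S. L (f i))"
  by (induction S rule: infinite_finite_induct) (auto simp: lina_zero lina_def)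

lemma lin_comp: "lina L \<Longrightarrow> L (lin f x) = lin (\<lambda>k. L (f k)) x"
  unfolding lin_def by (simp add: lina_sum) (simp add: lina_def)

lemma lina_lin: "lina (lin f)"
  by (simp add: lina_def lin_add lin_smul)

lemma lina_ext:
  assumes "lina L1" "lina L2" "\<And>k. L1 (Poly_Mapping.single k 1) = L2 (Poly_Mapping.single k 1)"
  shows "L1 x = L2 x"
proof -
  have "L1 x = L1 (lin (\<lambda>k. Poly_Mapping.single k 1) x)" by (simp add: lin_id)
  also have "\<dots> = L2 (lin (\<lambda>k. Poly_Mapping.single k 1) x)"
    by (simp add: lin_comp assms)
  finally show ?thesis by (simp add: lin_id)
qed

lemma lina_comp: "lina L1 \<Longrightarrow> lina L2 \<Longrightarrow> lina (\<lambda>x. L1 (L2 x))"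
  by (simp add: lina_def)
lemma lina_plus: "lina L1 \<Longrightarrow> lina L2 \<Longrightarrow> lina (\<lambda>x. L1 x + L2 x)"
  by (simp add: lina_def smul_add algebra_simps)
lemma lina_id: "lina (\<lambda>x. x)"
  by (simp add: lina_def)

lemma lin_swap: "lin (\<lambda>d. lin (\<lambda>e. F d e) y) x = lin (\<lambda>e. lin (\<lambda>d. F d e) x) y"
  by (simp add: lin_def smul_sum sum.swap[of _ "Poly_Mapping.keys x"] mult.commute)



lemma lina_lcons: "lina (lcons a)"
  unfolding lcons_def[abs_def] by (rule lina_lin)

lemma lcons_single: "lcons a (Poly_Mapping.single w 1) = Poly_Mapping.single (a # w) 1"
  by (simp add: lcons_def lin_single)

definition zl :: "('a \<Rightarrow>\<^sub>0 'r::comm_ring_1) \<Rightarrow> ('a \<Rightarrow>\<^sub>0 'r poly)" where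
  "zl z = Poly_Mapping.map (\<lambda>r. [:r:]) z"

lemma lookup_zl[simp]: "Poly_Mapping.lookup (zl z) d = [:Poly_Mapping.lookup z d:]"
  unfolding zl_def by (simp add: map.rep_eq when_def)

lemma keys_zl[simp]: "Poly_Mapping.keys (zl z) = Poly_Mapping.keys z"
  by (auto simp: in_keys_iff)

definition zcons :: "('a \<Rightarrow>\<^sub>0 'r::comm_ring_1) \<Rightarrow> ('a list \<Rightarrow>\<^sub>0 'r poly) \<Rightarrow> ('a list \<Rightarrow>\<^sub>0 'r poly)" where
  "zcons z X = lin (\<lambda>d. lcons d X) (zl z)"

lemma lina_zcons: "lina (zcons z)"
  unfolding zcons_def lina_def by (simp add: lina_lcons[unfolded lina_def] lin_fadd lin_fsmul)

lemma zcons_letter: fixes X :: "'a list \<Rightarrow>\<^sub>0 'r::comm_ring_1 poly"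
  shows "zcons (Poly_Mapping.single a 1) X = lcons a X"
proof -
  have "zl (Poly_Mapping.single a (1::'r::comm_ring_1)) = Poly_Mapping.single a 1"
    by (rule poly_mapping_eqI) (simp add: lookup_single when_def)
  thus ?thesis unfolding zcons_def by (simp add: lin_single)
qed

lemma zcons_explicit: "zcons z X = (\<Sum>d\<in>Poly_Mapping.keys z. smul [:Poly_Mapping.lookup z d:] (lcons d X))"
  by (simp add: zcons_def lin_def)

lemma zl_add: "zl (x + y) = zl x + zl y"
  by (rule poly_mapping_eqI) (simp add: lookup_add)
lemma zl_smul: "zl (smul r x) = smul [:r:] (zl x)"
  by (rule poly_mapping_eqI) simp
lemma zl_zero[simp]: "zl 0 = 0"
  by (rule poly_mapping_eqI) simp

lemma zcons_zadd: "zcons (x + y) X = zcons x X + zcons y X"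
  by (simp add: zcons_def zl_add lin_add)
lemma zcons_zsmul: "zcons (smul r x) X = smul [:r:] (zcons x X)"
  by (simp add: zcons_def zl_smul lin_smul)
lemma zcons_zzero[simp]: "zcons 0 X = 0"
  by (simp add: zcons_def)
lemma zcons_zsum: "zcons (sum f S) X = (\<Sum>i\<in>S. zcons (f i) X)"
  by (induction S rule: infinite_finite_induct) (auto simp: zcons_zadd)

lemma zcons_lin: "zcons (lin g z) X = lin (\<lambda>d. zcons (g d) X) (zl z)"
  by (simp add: lin_def[of g] zcons_zsum zcons_zsmul) (simp add: lin_def)

lemma zcons_zero[simp]: "zcons z 0 = 0"
  using lina_zero[OF lina_zcons] .

abbreviation Circ where "Circ c a \<equiv> lin (circ_word c a)"

lemma Circ_lcons: "Circ c a (lcons d X) = zcons (c a d) X"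
proof -
  have l1: "lina (\<lambda>X. Circ c a (lcons d X))" by (rule lina_comp[OF lina_lin lina_lcons])
  show ?thesis
  proof (rule lina_ext[OF l1 lina_zcons])
  fix w
  show "Circ c a (lcons d (Poly_Mapping.single w 1)) = zcons (c a d) (Poly_Mapping.single w 1)"
    by (simp add: lcons_single lin_single zcons_explicit smul_single)
  qed
qed

lemma Circ_zcons: "Circ c a (zcons z X) = zcons (lin (c a) z) X"
  by (simp add: zcons_def[of z] lin_comp[OF lina_lin] Circ_lcons zcons_lin)

lemma Circ_nil: "Circ c a (Poly_Mapping.single [] 1) = 0"
  by (simp add: lin_single)

lemma lina_harm1: "lina (\<lambda>X. harm c X Y)"
  unfolding harm_def by (rule lina_lin)

lemma lina_harm2: "lina (harm c X)"
  unfolding harm_def lina_def by (simp add: lin_add lin_smul lin_fadd lin_fsmul)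

lemma harm_single: "harm c (Poly_Mapping.single v 1) (Poly_Mapping.single w 1) = harm_word c v w"
  by (simp add: harm_def lin_single)

lemma harm_one_left: "harm c (Poly_Mapping.single [] 1) Y = Y"
proof -
  have "harm_word c [] = (\<lambda>w. Poly_Mapping.single w 1)" by auto
  thus ?thesis by (simp add: harm_def lin_single lin_id)
qed

lemma harm_one_right: "harm c X (Poly_Mapping.single [] 1) = X"
proof -
  have "harm c X (Poly_Mapping.single [] 1) = lin (\<lambda>v. Poly_Mapping.single v 1) X"
    unfolding harm_def lin_single
    by (rule arg_cong[where f="\<lambda>f. lin f X"]) (auto simp: fun_eq_iff neq_Nil_conv intro: harm_word.cases; case_tac x; simp)
  thus ?thesis by (simp add: lin_id)
qed

lemma harm_letters:
  "harm c (lcons a X) (lcons b Y) =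
     lcons a (harm c X (lcons b Y)) + lcons b (harm c (lcons a X) Y) + zcons (c a b) (harm c X Y)"
proof -
  have lY: "lina (\<lambda>Y. harm c (lcons a (Poly_Mapping.single v 1)) (lcons b Y))" for v
    by (rule lina_comp[OF lina_harm2 lina_lcons])
  have rY: "lina (\<lambda>Y. lcons a (harm c (Poly_Mapping.single v 1) (lcons b Y)) + lcons b (harm c (lcons a (Poly_Mapping.single v 1)) Y)
     + zcons (c a b) (harm c (Poly_Mapping.single v 1) Y))" for v
    by (intro lina_plus lina_comp[OF lina_lcons] lina_comp[OF lina_harm2] lina_lcons lina_harm2 lina_comp[OF lina_zcons])
  have sing: "harm c (lcons a (Poly_Mapping.single v 1)) (lcons b Y) =
     lcons a (harm c (Poly_Mapping.single v 1) (lcons b Y)) + lcons b (harm c (lcons a (Poly_Mapping.single v 1)) Y)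
     + zcons (c a b) (harm c (Poly_Mapping.single v 1) Y)" for v
    apply (rule lina_ext[OF lY rY])
    by (simp add: lcons_single harm_single zcons_explicit)
  have lX: "lina (\<lambda>X. harm c (lcons a X) (lcons b Y))"
    by (rule lina_comp[OF lina_harm1 lina_lcons])
  have rX: "lina (\<lambda>X. lcons a (harm c X (lcons b Y)) + lcons b (harm c (lcons a X) Y) + zcons (c a b) (harm c X Y))"
    by (intro lina_plus lina_comp[OF lina_lcons] lina_comp[OF lina_harm1] lina_lcons lina_harm1 lina_comp[OF lina_zcons])
  show ?thesis by (rule lina_ext[OF lX rX]) (rule sing)
qed

definition zmul :: "('a \<Rightarrow> 'a \<Rightarrow> ('a \<Rightarrow>\<^sub>0 'r::comm_ring_1)) \<Rightarrow> ('a \<Rightarrow>\<^sub>0 'r) \<Rightarrow> ('a \<Rightarrow>\<^sub>0 'r) \<Rightarrow> ('a \<Rightarrow>\<^sub>0 'r)" where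
  "zmul c z z' = lin (\<lambda>d. lin (c d) z') z"

lemma harm_zcons:
  "harm c (zcons z X) (zcons z' Y) =
     zcons z (harm c X (zcons z' Y)) + zcons z' (harm c (zcons z X) Y) + zcons (zmul c z z') (harm c X Y)"
proof -
  have "harm c (zcons z X) (zcons z' Y) =
     lin (\<lambda>d. lin (\<lambda>e. harm c (lcons d X) (lcons e Y)) (zl z')) (zl z)"
    unfolding zcons_def by (simp add: lin_comp[OF lina_harm1] lin_comp[OF lina_harm2] lin_swap[of _ "zl z"])
  also have "\<dots> = lin (\<lambda>d. lin (\<lambda>e. lcons d (harm c X (lcons e Y))) (zl z')) (zl z)
     + lin (\<lambda>e. lin (\<lambda>d. lcons e (harm c (lcons d X) Y)) (zl z)) (zl z')
     + lin (\<lambda>d. lin (\<lambda>e. zcons (c d e) (harm c X Y)) (zl z')) (zl z)"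
    by (simp add: harm_letters lin_fadd lin_swap[of _ "zl z'"])
  also have "\<dots> = zcons z (harm c X (zcons z' Y)) + zcons z' (harm c (zcons z X) Y) + zcons (zmul c z z') (harm c X Y)"
    unfolding zcons_def zmul_def
    by (simp add: lin_comp[OF lina_lcons] lin_comp[OF lina_harm1] lin_comp[OF lina_harm2] zcons_lin[unfolded zcons_def])
  finally show ?thesis .
qed



lemma lina_zmul2: "lina (zmul c x)"
  unfolding zmul_def lina_def by (simp add: lin_add lin_smul lin_fadd lin_fsmul)
lemma lina_zmul1: "lina (\<lambda>x. zmul c x y)"
  unfolding zmul_def[abs_def] by (rule lina_lin)
lemma zmul_letter: "zmul c (Poly_Mapping.single a 1) z = lin (c a) z"
  by (simp add: zmul_def lin_single)
lemma zmul_letters: "zmul c (Poly_Mapping.single a 1) (Poly_Mapping.single b 1) = c a b"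
  by (simp add: zmul_letter lin_single)

lemma zmul_comm:
  assumes comm: "\<And>a b. c a b = c b a"
  shows "zmul c x y = zmul c y x"
proof -
  have 1: "zmul c (Poly_Mapping.single a 1) y = zmul c y (Poly_Mapping.single a 1)" for a
    by (rule lina_ext[OF lina_zmul2 lina_zmul1]) (simp add: zmul_letters comm)
  show ?thesis by (rule lina_ext[OF lina_zmul1 lina_zmul2]) (rule 1)
qed

lemma zmul_assoc:
  assumes assoc: "\<And>a b e. lin (\<lambda>d. c d e) (c a b) = lin (\<lambda>d. c a d) (c b e)"
  shows "zmul c (zmul c x y) z = zmul c x (zmul c y z)"
proof -
  have 1: "zmul c (zmul c (Poly_Mapping.single a 1) (Poly_Mapping.single b 1)) z
     = zmul c (Poly_Mapping.single a 1) (zmul c (Poly_Mapping.single b 1) z)" for a b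
  proof (rule lina_ext[OF lina_zmul2 lina_comp[OF lina_zmul2 lina_zmul2]])
    fix e
    have "zmul c (c a b) (Poly_Mapping.single e 1) = lin (\<lambda>d. c d e) (c a b)"
      by (simp add: zmul_def lin_single)
    moreover have "zmul c (Poly_Mapping.single a 1) (c b e) = lin (\<lambda>d. c a d) (c b e)"
      by (simp add: zmul_letter)
    ultimately show "zmul c (zmul c (Poly_Mapping.single a 1) (Poly_Mapping.single b 1)) (Poly_Mapping.single e 1) =
         zmul c (Poly_Mapping.single a 1) (zmul c (Poly_Mapping.single b 1) (Poly_Mapping.single e 1))"
      by (simp add: zmul_letters assoc)
  qed
  have 2: "zmul c (zmul c (Poly_Mapping.single a 1) y) z
     = zmul c (Poly_Mapping.single a 1) (zmul c y z)" for a
    by (rule lina_ext[OF lina_comp[OF lina_zmul1 lina_zmul2] lina_comp[OF lina_zmul2 lina_zmul1]]) (rule 1)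
  show ?thesis
    by (rule lina_ext[OF lina_comp[OF lina_zmul1 lina_zmul1] lina_zmul1]) (rule 2)
qed

fun cont :: "('a \<Rightarrow> 'a \<Rightarrow> ('a \<Rightarrow>\<^sub>0 'r::comm_ring_1)) \<Rightarrow> 'a list \<Rightarrow> ('a \<Rightarrow>\<^sub>0 'r)" where
  "cont c [] = 0"
| "cont c [a] = Poly_Mapping.single a 1"
| "cont c (a # b # w) = zmul c (Poly_Mapping.single a 1) (cont c (b # w))"

lemma cont_cons: "v \<noteq> [] \<Longrightarrow> cont c (a # v) = zmul c (Poly_Mapping.single a 1) (cont c v)"
  by (cases v) auto

lemma cont_append:
  assumes assoc: "\<And>a b e. lin (\<lambda>d. c d e) (c a b) = lin (\<lambda>d. c a d) (c b e)"
  shows "x \<noteq> [] \<Longrightarrow> y \<noteq> [] \<Longrightarrow> cont c (x @ y) = zmul c (cont c x) (cont c y)"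
proof (induction x)
  case Nil thus ?case by simp
next
  case (Cons a x)
  show ?case
  proof (cases "x = []")
    case True thus ?thesis using Cons by (simp add: cont_cons)
  next
    case False thus ?thesis using Cons by (simp add: cont_cons zmul_assoc[OF assoc])
  qed
qed

lemma cont_rev:
  assumes comm: "\<And>a b. c a b = c b a"
    and assoc: "\<And>a b e. lin (\<lambda>d. c d e) (c a b) = lin (\<lambda>d. c a d) (c b e)"
  shows "cont c (rev w) = cont c w"
proof (induction w)
  case Nil thus ?case by simp
next
  case (Cons a w)
  show ?case
  proof (cases "w = []")
    case True thus ?thesis by simp
  next
    case False
    have "cont c (rev (a # w)) = zmul c (cont c (rev w)) (cont c [a])"
      using False by (simp add: cont_append[OF assoc])
    also have "\<dots> = cont c (a # w)" using Cons False by (simp add: cont_cons zmul_comm[OF comm])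
    finally show ?thesis .
  qed
qed

lemma Sop_expand:
  "w \<noteq> [] \<Longrightarrow> Sop c s w = (\<Sum>j<length w. smul (s ^ j) (zcons (cont c (take (Suc j) w)) (Sop c s (drop (Suc j) w))))"
proof (induction w)
  case Nil thus ?case by simp
next
  case (Cons a w)
  show ?case
  proof (cases "w = []")
    case True thus ?thesis by (simp add: Circ_nil zcons_letter)
  next
    case False
    have "Sop c s (a # w) = lcons a (Sop c s w) +
       (\<Sum>j<length w. smul (s ^ Suc j) (zcons (cont c (take (Suc (Suc j)) (a # w))) (Sop c s (drop (Suc (Suc j)) (a # w)))))"
      using Cons False
      by (simp add: lin_sum lin_smul Circ_zcons smul_sum cont_cons zmul_letter mult.commute)
    also have "\<dots> = (\<Sum>j<length (a # w). smul (s ^ j) (zcons (cont c (take (Suc j) (a # w))) (Sop c s (drop (Suc j) (a # w)))))"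
      by (simp only: length_Cons sum.lessThan_Suc_shift) (simp add: zcons_letter)
    finally show ?thesis .
  qed
qed



lemma harm_add1: "harm c (x + y) Y = harm c x Y + harm c y Y"
  using lina_harm1[unfolded lina_def] by blast
lemma harm_add2: "harm c X (x + y) = harm c X x + harm c X y"
  using lina_harm2[unfolded lina_def] by blast
lemma harm_smul1: "harm c (smul a x) Y = smul a (harm c x Y)"
  using lina_harm1[unfolded lina_def] by blast
lemma harm_smul2: "harm c X (smul a y) = smul a (harm c X y)"
  using lina_harm2[unfolded lina_def] by blast
lemma harm_sum1: "harm c (sum f S) Y = (\<Sum>i\<in>S. harm c (f i) Y)"
  using lina_sum[OF lina_harm1] .
lemma harm_sum2: "harm c X (sum f S) = (\<Sum>i\<in>S. harm c X (f i))"
  using lina_sum[OF lina_harm2] .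
lemma zcons_smul: "zcons z (smul a x) = smul a (zcons z x)"
  using lina_zcons[unfolded lina_def] by blast
lemma zcons_add: "zcons z (x + y) = zcons z x + zcons z y"
  using lina_zcons[unfolded lina_def] by blast
lemma zcons_sum: "zcons z (sum f S) = (\<Sum>i\<in>S. zcons z (f i))"
  using lina_sum[OF lina_zcons] .

lemmas lin_rules = harm_add1 harm_add2 harm_smul1 harm_smul2 harm_sum1 harm_sum2 zcons_smul zcons_add zcons_sum smul_sum

lemma swap2: "(\<Sum>k\<in>{0..n::nat}. \<Sum>j<k. g j k) = (\<Sum>j<n. \<Sum>k\<in>{Suc j..n}. g j k)"
proof -
  have "(\<Sum>k\<in>{0..n::nat}. \<Sum>j<k. g j k) = (\<Sum>k\<in>{0..n::nat}. \<Sum>j<n. if j < k then g j k else 0)"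
    by (rule sum.cong[OF refl], subst sum.inter_filter[symmetric]) (auto intro: sum.cong)
  also have "\<dots> = (\<Sum>j<n. \<Sum>k\<in>{0..n::nat}. if j < k then g j k else 0)" by (rule sum.swap)
  also have "\<dots> = (\<Sum>j<n. \<Sum>k\<in>{Suc j..n}. g j k)"
    by (rule sum.cong[OF refl], subst sum.inter_filter[symmetric]) (auto intro: sum.cong)
  finally show ?thesis .
qed

lemma swap2b: "(\<Sum>k\<in>{0..n::nat}. \<Sum>i<n-k. g i k) = (\<Sum>i<n. \<Sum>k\<in>{0..n - Suc i}. g i k)"
proof -
  have "(\<Sum>k\<in>{0..n::nat}. \<Sum>i<n-k. g i k) = (\<Sum>k\<in>{0..n::nat}. \<Sum>i<n. if i < n - k then g i k else 0)"
    by (rule sum.cong[OF refl], subst sum.inter_filter[symmetric]) (auto intro: sum.cong)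
  also have "\<dots> = (\<Sum>i<n. \<Sum>k\<in>{0..n::nat}. if i < n - k then g i k else 0)" by (rule sum.swap)
  also have "\<dots> = (\<Sum>i<n. \<Sum>k\<in>{0..n - Suc i}. g i k)"
    by (rule sum.cong[OF refl], subst sum.inter_filter[symmetric]) (auto intro: sum.cong)
  finally show ?thesis .
qed

lemma restr: "m \<le> (n::nat) \<Longrightarrow> (\<Sum>i<m. f i) = (\<Sum>i<n. if i < m then f i else 0)"
proof -
  assume "m \<le> n"
  hence "{i \<in> {..<n}. i < m} = {..<m}" by auto
  thus ?thesis by (metis (no_types) finite_lessThan sum.inter_filter)
qed

lemma restr2: "(\<Sum>i\<in>{a..b::nat}. f i) = (\<Sum>i\<in>{0..n}. if a \<le> i \<and> i \<le> b then f i else 0)" if "b \<le> n"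
proof -
  have "{i \<in> {0..n}. a \<le> i \<and> i \<le> b} = {a..b}" using that by auto
  thus ?thesis by (metis (no_types) finite_atLeastAtMost sum.inter_filter)
qed

lemma swap3: "(\<Sum>k\<in>{0..n::nat}. \<Sum>j<k. \<Sum>i<n-k. g j i k) = (\<Sum>j<n. \<Sum>i<n. \<Sum>k\<in>{Suc j..n - Suc i}. g j i k)"
proof -
  have "(\<Sum>k\<in>{0..n::nat}. \<Sum>j<k. \<Sum>i<n-k. g j i k) = (\<Sum>k\<in>{0..n::nat}. \<Sum>j<n. \<Sum>i<n. if Suc j \<le> k \<and> k \<le> n - Suc i then g j i k else 0)"
  proof (rule sum.cong[OF refl])
    fix k assume k: "k \<in> {0..n}"
    have "(\<Sum>j<k. \<Sum>i<n-k. g j i k) = (\<Sum>j<n. if j < k then (\<Sum>i<n-k. g j i k) else 0)"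
      using k by (intro restr) auto
    also have "\<dots> = (\<Sum>j<n. \<Sum>i<n. if Suc j \<le> k \<and> k \<le> n - Suc i then g j i k else 0)"
    proof (rule sum.cong[OF refl])
      fix j
      have "(\<Sum>i<n-k. g j i k) = (\<Sum>i<n. if i < n - k then g j i k else 0)" by (intro restr) auto
      thus "(if j < k then (\<Sum>i<n-k. g j i k) else 0) = (\<Sum>i<n. if Suc j \<le> k \<and> k \<le> n - Suc i then g j i k else 0)"
        using k by (auto intro!: sum.cong)
    qed
    finally show "(\<Sum>j<k. \<Sum>i<n-k. g j i k) = (\<Sum>j<n. \<Sum>i<n. if Suc j \<le> k \<and> k \<le> n - Suc i then g j i k else 0)" .
  qed
  also have "\<dots> = (\<Sum>j<n. \<Sum>i<n. \<Sum>k\<in>{0..n::nat}. if Suc j \<le> k \<and> k \<le> n - Suc i then g j i k else 0)"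
    by (subst sum.swap) (rule sum.cong[OF refl], rule sum.swap)
  also have "\<dots> = (\<Sum>j<n. \<Sum>i<n. \<Sum>k\<in>{Suc j..n - Suc i}. g j i k)"
    by (intro sum.cong[OF refl] restr2[symmetric]) auto
  finally show ?thesis .
qed



lemma harm_expand:
  assumes X: "X = (\<Sum>j\<in>J. smul (\<alpha> j) (zcons (z j) (Xs j)))"
    and Y: "Y = (\<Sum>i\<in>I. smul (\<beta> i) (zcons (z' i) (Ys i)))"
  shows "harm c X Y = (\<Sum>j\<in>J. smul (\<alpha> j) (zcons (z j) (harm c (Xs j) Y)))
     + (\<Sum>i\<in>I. smul (\<beta> i) (zcons (z' i) (harm c X (Ys i))))
     + (\<Sum>j\<in>J. \<Sum>i\<in>I. smul (\<alpha> j * \<beta> i) (zcons (zmul c (z j) (z' i)) (harm c (Xs j) (Ys i))))"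
proof -
  have "harm c X Y = (\<Sum>j\<in>J. \<Sum>i\<in>I. smul (\<alpha> j * \<beta> i) (harm c (zcons (z j) (Xs j)) (zcons (z' i) (Ys i))))"
    unfolding X Y by (simp add: harm_sum1 harm_sum2 harm_smul1 harm_smul2 smul_sum, subst sum.swap, simp add: mult.commute)
  also have "\<dots> = (\<Sum>j\<in>J. \<Sum>i\<in>I. smul (\<alpha> j * \<beta> i) (zcons (z j) (harm c (Xs j) (zcons (z' i) (Ys i)))))
     + (\<Sum>j\<in>J. \<Sum>i\<in>I. smul (\<alpha> j * \<beta> i) (zcons (z' i) (harm c (zcons (z j) (Xs j)) (Ys i))))
     + (\<Sum>j\<in>J. \<Sum>i\<in>I. smul (\<alpha> j * \<beta> i) (zcons (zmul c (z j) (z' i)) (harm c (Xs j) (Ys i))))"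
    by (simp add: harm_zcons smul_add sum.distrib)
  also have "(\<Sum>j\<in>J. \<Sum>i\<in>I. smul (\<alpha> j * \<beta> i) (zcons (z j) (harm c (Xs j) (zcons (z' i) (Ys i)))))
      = (\<Sum>j\<in>J. smul (\<alpha> j) (zcons (z j) (harm c (Xs j) Y)))"
    unfolding Y by (simp add: harm_sum2 harm_smul2 zcons_sum zcons_smul smul_sum mult.commute)
  also have "(\<Sum>j\<in>J. \<Sum>i\<in>I. smul (\<alpha> j * \<beta> i) (zcons (z' i) (harm c (zcons (z j) (Xs j)) (Ys i))))
      = (\<Sum>i\<in>I. \<Sum>j\<in>J. smul (\<alpha> j * \<beta> i) (zcons (z' i) (harm c (zcons (z j) (Xs j)) (Ys i))))"
    by (rule sum.swap)
  also have "\<dots> = (\<Sum>i\<in>I. smul (\<beta> i) (zcons (z' i) (harm c X (Ys i))))"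
    unfolding X by (simp add: harm_sum1 harm_smul1 zcons_sum zcons_smul smul_sum mult.commute)
  finally show ?thesis .
qed

lemma coef_sum:
  fixes t u :: "'b::comm_ring_1"
  assumes "t + u = 1"
  shows "(\<Sum>j<m. (-1) ^ Suc j * t ^ j * u ^ (m - 1 - j)) = (-t) ^ m - u ^ m"
proof (induction m)
  case 0 thus ?case by simp
next
  case (Suc m)
  have "(\<Sum>j<m. (-1) ^ Suc j * t ^ j * u ^ (Suc m - 1 - j)) = u * (\<Sum>j<m. (-1) ^ Suc j * t ^ j * u ^ (m - 1 - j))"
      unfolding sum_distrib_left
  proof (rule sum.cong[OF refl])
      fix j assume "j \<in> {..<m}"
      hence "Suc m - 1 - j = Suc (m - 1 - j)" by auto
      thus "(-1) ^ Suc j * t ^ j * u ^ (Suc m - 1 - j) = u * ((-1) ^ Suc j * t ^ j * u ^ (m - 1 - j))"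
        by (simp only: power_Suc mult_ac)
  qed
  hence 1: "(\<Sum>j<Suc m. (-1) ^ Suc j * t ^ j * u ^ (Suc m - 1 - j)) =
        u * (\<Sum>j<m. (-1) ^ Suc j * t ^ j * u ^ (m - 1 - j)) + (-1) ^ Suc m * t ^ m"
    by (simp only: sum.lessThan_Suc diff_self_eq_0 power_0 mult_1_right Suc_diff_1 zero_less_Suc diff_Suc_1)
  have t: "t = 1 - u" using assms by (simp add: eq_diff_eq)
  have a: "(-1) ^ Suc m * t ^ m = - ((-t)^m)" by (simp add: power_minus[of t])
  have b: "(-t) ^ Suc m = - t * (-t)^m" by (rule power_Suc)
  have g: "\<And>P. u * (P - u ^ m) + - P = - (1 - u) * P - u ^ Suc m" by (simp add: algebra_simps)
  have "1 - u = t" using t by simp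
  then show ?case unfolding 1 Suc a b using g[of "(-t)^m"] by simp
qed


definition HH :: "('a \<Rightarrow> 'a \<Rightarrow> ('a \<Rightarrow>\<^sub>0 'r::comm_ring_1)) \<Rightarrow> 'a list \<Rightarrow> ('a list \<Rightarrow>\<^sub>0 'r poly)" where
  "HH c w = (\<Sum>k = 0..length w. smul ((-1) ^ k)
              (harm c (Sop c [:0, 1:] (take k w)) (Sop c [:1, -1:] (rev (drop k w)))))"

lemma HH_Nil: "HH c [] = Poly_Mapping.single [] 1"
  by (simp add: HH_def harm_one_left)

lemma shift_sum:
  assumes "a \<le> (b::nat)"
  shows "(\<Sum>k\<in>{a..b}. f k) = (\<Sum>m\<in>{0..b - a}. f (a + m))"
  using sum.atLeastAtMost_shift_0[OF assms, of f] by (simp add: comp_def)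

lemma main:
  fixes c :: "'a \<Rightarrow> 'a \<Rightarrow> ('a \<Rightarrow>\<^sub>0 'r::comm_ring_1)"
  assumes comm: "\<And>a b. c a b = c b a"
    and assoc: "\<And>a b e. lin (\<lambda>d. c d e) (c a b) = lin (\<lambda>d. c a d) (c b e)"
  shows "HH c w = (if w = [] then Poly_Mapping.single [] 1 else 0)"
proof (induction "length w" arbitrary: w rule: less_induct)
  case less
  show ?case
  proof (cases "w = []")
    case True thus ?thesis by (simp add: HH_Nil)
  next
    case False
    define n where "n = length w"
    have n1: "n \<ge> 1" using False by (simp add: n_def Suc_le_eq)
    have IH: "\<And>v. length v < n \<Longrightarrow> HH c v = (if v = [] then Poly_Mapping.single [] 1 else 0)"
      using less n_def by blast
    define tt :: "'r poly" where "tt = [:0, 1:]"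
    define uu :: "'r poly" where "uu = [:1, -1:]"
    define T where "T = Sop c tt"
    define U where "U = Sop c uu"
    define X where "X k = T (take k w)" for k
    define Y where "Y k = U (rev (drop k w))" for k
    define cl where "cl j = cont c (take (Suc j) w)" for j
    define cr where "cr i = cont c (drop (n - Suc i) w)" for i
    define XJ where "XJ j k = T (take (k - Suc j) (drop (Suc j) w))" for j k
    define YI where "YI i k = U (rev (drop k (take (n - Suc i) w)))" for i k
    have expX: "X k = (\<Sum>j<k. smul (tt ^ j) (zcons (cl j) (XJ j k)))" if "1 \<le> k" "k \<le> n" for k
    proof -
      have ne: "take k w \<noteq> []" using that n_def by (cases w) auto
      have lk: "length (take k w) = k" using that n_def by simp
      show ?thesis unfolding X_def T_def Sop_expand[OF ne] lk
        by (rule sum.cong[OF refl]) (simp add: cl_def XJ_def T_def drop_take min_def)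
    qed
    have expY: "Y k = (\<Sum>i<n-k. smul (uu ^ i) (zcons (cr i) (YI i k)))" if "k < n" for k
    proof -
      have ne: "rev (drop k w) \<noteq> []" using that n_def by simp
      have lk: "length (rev (drop k w)) = n - k" using that n_def by simp
      show ?thesis unfolding Y_def U_def Sop_expand[OF ne] lk
      proof (rule sum.cong[OF refl])
        fix i assume i: "i \<in> {..<n-k}"
        have 1: "take (Suc i) (rev (drop k w)) = rev (drop (n - Suc i) w)"
          using i n_def by (simp add: take_rev)
        have 2: "drop (Suc i) (rev (drop k w)) = rev (drop k (take (n - Suc i) w))"
          using i n_def by (simp add: drop_rev drop_take add.commute)
        show "smul (uu ^ i) (zcons (cont c (take (Suc i) (rev (drop k w)))) (Sop c uu (drop (Suc i) (rev (drop k w))))) =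
          smul (uu ^ i) (zcons (cr i) (YI i k))"
          unfolding 1 2 cr_def YI_def U_def cont_rev[OF comm assoc] ..
      qed
    qed
    define F1 where "F1 k = (\<Sum>j<k. smul (tt ^ j) (zcons (cl j) (harm c (XJ j k) (Y k))))" for k
    define F2 where "F2 k = (\<Sum>i<n-k. smul (uu ^ i) (zcons (cr i) (harm c (X k) (YI i k))))" for k
    define F3 where "F3 k = (\<Sum>j<k. \<Sum>i<n-k. smul (tt ^ j * uu ^ i) (zcons (zmul c (cl j) (cr i)) (harm c (XJ j k) (YI i k))))" for k
    have termk: "harm c (X k) (Y k) = F1 k + F2 k + F3 k" if kn: "k \<le> n" for k
    proof -
      consider "k = 0" | "k = n" | "1 \<le> k" "k < n" using kn n1 by linarith
      thus ?thesis
      proof cases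
        case 1
        have X0: "X 0 = Poly_Mapping.single [] 1" by (simp add: X_def T_def)
        show ?thesis using n1 unfolding 1 F1_def F2_def F3_def
          by (simp add: X0 harm_one_left expY)
      next
        case 2
        have Yn: "Y n = Poly_Mapping.single [] 1" by (simp add: Y_def U_def n_def)
        show ?thesis using n1 unfolding 2 F1_def F2_def F3_def
          by (simp add: Yn harm_one_right expX)
      next
        case 3
        show ?thesis unfolding F1_def F2_def F3_def
          by (rule harm_expand[OF expX expY]) (use 3 in auto)
      qed
    qed
    define E1 :: "'a list \<Rightarrow>\<^sub>0 'r poly" where "E1 = Poly_Mapping.single [] 1"
    define Ew where "Ew = zcons (cont c w) E1"
    have IH': "HH c v = (if v = [] then E1 else 0)" if "length v < n" for v
      using IH[OF that] E1_def by simp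
    have H0: "HH c w = (\<Sum>k\<in>{0..n}. smul ((-1) ^ k) (harm c (X k) (Y k)))"
      by (simp add: HH_def n_def X_def Y_def T_def U_def tt_def uu_def)
    also have "\<dots> = (\<Sum>k\<in>{0..n}. smul ((-1) ^ k) (F1 k)) + (\<Sum>k\<in>{0..n}. smul ((-1) ^ k) (F2 k))
       + (\<Sum>k\<in>{0..n}. smul ((-1) ^ k) (F3 k))"
      by (simp add: termk smul_add sum.distrib)
    finally have Hsum: "HH c w = \<dots>" .
    have pn: "(-1::'r poly) ^ n = - ((-1) ^ (n - Suc 0))"
      using n1 by (cases n) auto
    have tw: "take (Suc (n - Suc 0)) w = w" using n1 by (simp add: n_def)
    have dw: "drop (n - Suc (n - Suc 0)) w = w" using n1 by (simp add: n_def)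
    have tw': "take n w = w" by (simp add: n_def)
    have inner1: "(\<Sum>k\<in>{Suc j..n}. smul ((-1) ^ k) (harm c (XJ j k) (Y k))) = smul ((-1) ^ Suc j) (HH c (drop (Suc j) w))"
      if j: "j < n" for j
    proof -
      have "(\<Sum>k\<in>{Suc j..n}. smul ((-1) ^ k) (harm c (XJ j k) (Y k)))
          = (\<Sum>m\<in>{0..n - Suc j}. smul ((-1) ^ (Suc j + m)) (harm c (XJ j (Suc j + m)) (Y (Suc j + m))))"
        using j by (intro shift_sum) simp
      also have "\<dots> = smul ((-1) ^ Suc j) (HH c (drop (Suc j) w))"
        unfolding HH_def smul_sum
        by (rule sum.cong) (simp_all add: n_def power_add XJ_def Y_def T_def U_def tt_def uu_def add.commute mult.commute)
      finally show ?thesis .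
    qed
    have S1: "(\<Sum>k\<in>{0..n}. smul ((-1) ^ k) (F1 k)) = smul (tt ^ (n - 1) * (-1) ^ n) Ew"
    proof -
      have "(\<Sum>k\<in>{0..n}. smul ((-1) ^ k) (F1 k)) = (\<Sum>k\<in>{0..n}. \<Sum>j<k. smul ((-1) ^ k) (smul (tt ^ j) (zcons (cl j) (harm c (XJ j k) (Y k)))))"
        unfolding F1_def smul_sum ..
      also have "\<dots> = (\<Sum>j<n. \<Sum>k\<in>{Suc j..n}. smul ((-1) ^ k) (smul (tt ^ j) (zcons (cl j) (harm c (XJ j k) (Y k)))))"
        by (rule swap2)
      also have "\<dots> = (\<Sum>j<n. smul (tt ^ j) (zcons (cl j) (\<Sum>k\<in>{Suc j..n}. smul ((-1) ^ k) (harm c (XJ j k) (Y k)))))"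
        by (simp add: zcons_sum zcons_smul smul_sum mult.commute)
      also have "\<dots> = (\<Sum>j<n. if j = n - 1 then smul (tt ^ j * (-1) ^ Suc j) (zcons (cl j) E1) else 0)"
      proof (rule sum.cong[OF refl])
        fix j assume j: "j \<in> {..<n}"
        have "HH c (drop (Suc j) w) = (if j = n - 1 then E1 else 0)"
          using j n1 by (subst IH') (auto simp: n_def)
        thus "smul (tt ^ j) (zcons (cl j) (\<Sum>k\<in>{Suc j..n}. smul ((-1) ^ k) (harm c (XJ j k) (Y k)))) =
          (if j = n - 1 then smul (tt ^ j * (-1) ^ Suc j) (zcons (cl j) E1) else 0)"
          using j by (simp add: inner1 zcons_smul pn)
      qed
      also have "\<dots> = smul (tt ^ (n - 1) * (-1) ^ n) Ew"
        using n1 by (simp add: Ew_def cl_def tw tw' pn)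
      finally show ?thesis .
    qed
    have inner2: "(\<Sum>k\<in>{0..n - Suc i}. smul ((-1) ^ k) (harm c (X k) (YI i k))) = HH c (take (n - Suc i) w)"
      if i: "i < n" for i
      unfolding HH_def
      by (rule sum.cong) (simp_all add: n_def X_def YI_def T_def U_def tt_def uu_def)
    have S2: "(\<Sum>k\<in>{0..n}. smul ((-1) ^ k) (F2 k)) = smul (uu ^ (n - 1)) Ew"
    proof -
      have "(\<Sum>k\<in>{0..n}. smul ((-1) ^ k) (F2 k)) = (\<Sum>k\<in>{0..n}. \<Sum>i<n-k. smul ((-1) ^ k) (smul (uu ^ i) (zcons (cr i) (harm c (X k) (YI i k)))))"
        unfolding F2_def smul_sum ..
      also have "\<dots> = (\<Sum>i<n. \<Sum>k\<in>{0..n - Suc i}. smul ((-1) ^ k) (smul (uu ^ i) (zcons (cr i) (harm c (X k) (YI i k)))))"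
        by (rule swap2b)
      also have "\<dots> = (\<Sum>i<n. smul (uu ^ i) (zcons (cr i) (\<Sum>k\<in>{0..n - Suc i}. smul ((-1) ^ k) (harm c (X k) (YI i k)))))"
        by (simp add: zcons_sum zcons_smul smul_sum mult.commute)
      also have "\<dots> = (\<Sum>i<n. if i = n - 1 then smul (uu ^ i) (zcons (cr i) E1) else 0)"
      proof (rule sum.cong[OF refl])
        fix i assume i: "i \<in> {..<n}"
        have "HH c (take (n - Suc i) w) = (if i = n - 1 then E1 else 0)"
          using i n1 by (subst IH') (auto simp: n_def)
        thus "smul (uu ^ i) (zcons (cr i) (\<Sum>k\<in>{0..n - Suc i}. smul ((-1) ^ k) (harm c (X k) (YI i k)))) =
          (if i = n - 1 then smul (uu ^ i) (zcons (cr i) E1) else 0)"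
          using i by (simp add: inner2)
      qed
      also have "\<dots> = smul (uu ^ (n - 1)) Ew"
        using n1 by (simp add: Ew_def cr_def dw)
      finally show ?thesis .
    qed
    have inner3: "(\<Sum>k\<in>{Suc j..n - Suc i}. smul ((-1) ^ k) (harm c (XJ j k) (YI i k)))
       = (if Suc j + Suc i = n then smul ((-1) ^ Suc j) E1 else 0)"
      if j: "j < n" and i: "i < n" for i j
    proof (cases "Suc j \<le> n - Suc i")
      case False thus ?thesis by auto
    next
      case True
      have "(\<Sum>k\<in>{Suc j..n - Suc i}. smul ((-1) ^ k) (harm c (XJ j k) (YI i k)))
          = (\<Sum>m\<in>{0..n - Suc i - Suc j}. smul ((-1) ^ (Suc j + m)) (harm c (XJ j (Suc j + m)) (YI i (Suc j + m))))"
        using True by (intro shift_sum)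
      also have "\<dots> = smul ((-1) ^ Suc j) (HH c (drop (Suc j) (take (n - Suc i) w)))"
        unfolding HH_def smul_sum
      proof (rule sum.cong)
        show "{0..n - Suc i - Suc j} = {0..length (drop (Suc j) (take (n - Suc i) w))}"
          using i by (simp add: n_def)
        fix m assume m: "m \<in> {0..length (drop (Suc j) (take (n - Suc i) w))}"
        have 1: "take m (drop (Suc j) (take (n - Suc i) w)) = take m (drop (Suc j) w)"
          using m by (simp add: drop_take)
        show "smul ((-1) ^ (Suc j + m)) (harm c (XJ j (Suc j + m)) (YI i (Suc j + m))) =
          smul ((-1) ^ Suc j) (smul ((-1) ^ m) (harm c (Sop c [:0, 1:] (take m (drop (Suc j) (take (n - Suc i) w))))
             (Sop c [:1, - 1:] (rev (drop m (drop (Suc j) (take (n - Suc i) w)))))))"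
          unfolding 1 by (simp add: power_add XJ_def YI_def T_def U_def tt_def uu_def add.commute mult.commute)
      qed
      also have "\<dots> = (if Suc j + Suc i = n then smul ((-1) ^ Suc j) E1 else 0)"
        using True i j by (subst IH') (auto simp: n_def)
      finally show ?thesis .
    qed
    have S3: "(\<Sum>k\<in>{0..n}. smul ((-1) ^ k) (F3 k)) = smul (\<Sum>j<n - 1. (-1) ^ Suc j * tt ^ j * uu ^ (n - 1 - 1 - j)) Ew"
    proof -
      have "(\<Sum>k\<in>{0..n}. smul ((-1) ^ k) (F3 k)) = (\<Sum>k\<in>{0..n}. \<Sum>j<k. \<Sum>i<n-k. smul ((-1) ^ k) (smul (tt ^ j * uu ^ i) (zcons (zmul c (cl j) (cr i)) (harm c (XJ j k) (YI i k)))))"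
        unfolding F3_def smul_sum ..
      also have "\<dots> = (\<Sum>j<n. \<Sum>i<n. \<Sum>k\<in>{Suc j..n - Suc i}. smul ((-1) ^ k) (smul (tt ^ j * uu ^ i) (zcons (zmul c (cl j) (cr i)) (harm c (XJ j k) (YI i k)))))"
        by (rule swap3)
      also have "\<dots> = (\<Sum>j<n. \<Sum>i<n. smul (tt ^ j * uu ^ i) (zcons (zmul c (cl j) (cr i)) (\<Sum>k\<in>{Suc j..n - Suc i}. smul ((-1) ^ k) (harm c (XJ j k) (YI i k)))))"
        by (simp add: zcons_sum zcons_smul smul_sum mult.commute)
      also have "\<dots> = (\<Sum>j<n. \<Sum>i<n. if i = n - Suc (Suc j) \<and> j < n - 1 then smul ((-1) ^ Suc j * tt ^ j * uu ^ i) Ew else 0)"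
      proof (intro sum.cong[OF refl])
        fix j i assume j: "j \<in> {..<n}" and i: "i \<in> {..<n}"
        show "smul (tt ^ j * uu ^ i) (zcons (zmul c (cl j) (cr i)) (\<Sum>k\<in>{Suc j..n - Suc i}. smul ((-1) ^ k) (harm c (XJ j k) (YI i k))))
          = (if i = n - Suc (Suc j) \<and> j < n - 1 then smul ((-1) ^ Suc j * tt ^ j * uu ^ i) Ew else 0)"
        proof (cases "Suc j + Suc i = n")
          case False
          hence cc: "(i = n - Suc (Suc j) \<and> j < n - 1) = False" by auto
          show ?thesis using False i j by (simp only: cc if_False) (simp add: inner3)
        next
          case True
          have z: "zmul c (cl j) (cr i) = cont c w"
          proof -
            have "n - Suc i = Suc j" using True by simp
            hence "zmul c (cl j) (cr i) = zmul c (cont c (take (Suc j) w)) (cont c (drop (Suc j) w))"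
              by (simp add: cl_def cr_def)
            also have "\<dots> = cont c (take (Suc j) w @ drop (Suc j) w)"
              using True by (intro cont_append[OF assoc, symmetric]) (auto simp: n_def)
            finally show ?thesis by simp
          qed
          have "i = n - Suc (Suc j) \<and> j < n - 1" using True by auto
          moreover have jn: "j < n" and inn: "i < n" using i j by auto
          ultimately show ?thesis unfolding inner3[OF jn inn] z if_P[OF True] using True
            by (simp add: Ew_def zcons_smul mult.commute mult.left_commute)
        qed
      qed
      also have "\<dots> = (\<Sum>j<n. if j < n - 1 then smul ((-1) ^ Suc j * tt ^ j * uu ^ (n - 1 - 1 - j)) Ew else 0)"
      proof (rule sum.cong[OF refl])
        fix j assume j: "j \<in> {..<n}"
        have "(\<Sum>i<n. if i = n - Suc (Suc j) \<and> j < n - 1 then smul ((-1) ^ Suc j * tt ^ j * uu ^ i) Ew else 0)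
            = (\<Sum>i<n. if i = n - Suc (Suc j) then (if j < n - 1 then smul ((-1) ^ Suc j * tt ^ j * uu ^ i) Ew else 0) else 0)"
          by (rule sum.cong) auto
        also have "\<dots> = (if n - Suc (Suc j) \<in> {..<n} then (if j < n - 1 then smul ((-1) ^ Suc j * tt ^ j * uu ^ (n - Suc (Suc j))) Ew else 0) else 0)"
          by (rule sum.delta) simp
        also have "\<dots> = (if j < n - 1 then smul ((-1) ^ Suc j * tt ^ j * uu ^ (n - 1 - 1 - j)) Ew else 0)"
        proof -
          have e: "n - 1 - 1 - j = n - Suc (Suc j)" by simp
          have m: "n - Suc (Suc j) \<in> {..<n}" using n1 by simp
          show ?thesis unfolding e if_P[OF m] ..
        qed
        finally show "(\<Sum>i<n. if i = n - Suc (Suc j) \<and> j < n - 1 then smul ((-1) ^ Suc j * tt ^ j * uu ^ i) Ew else 0) = \<dots>" .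
      qed
      also have "\<dots> = (\<Sum>j<n - 1. smul ((-1) ^ Suc j * tt ^ j * uu ^ (n - 1 - 1 - j)) Ew)"
        by (rule restr[symmetric]) simp
      also have "\<dots> = smul (\<Sum>j<n - 1. (-1) ^ Suc j * tt ^ j * uu ^ (n - 1 - 1 - j)) Ew"
        by (simp add: smul_sum_left)
      finally show ?thesis .
    qed
    have tu: "tt + uu = 1" by (simp add: tt_def uu_def one_pCons)
    have coef: "tt ^ (n - 1) * (-1) ^ n + uu ^ (n - 1) + (\<Sum>j<n - 1. (-1) ^ Suc j * tt ^ j * uu ^ (n - 1 - 1 - j)) = 0"
    proof -
      have "tt ^ (n - 1) * (-1) ^ n = - ((-tt) ^ (n - 1))"
        using pn by (simp add: power_minus[of tt] mult.commute)
      thus ?thesis unfolding coef_sum[OF tu] by simp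
    qed
    have "HH c w = smul (tt ^ (n - 1) * (-1) ^ n + uu ^ (n - 1) + (\<Sum>j<n - 1. (-1) ^ Suc j * tt ^ j * uu ^ (n - 1 - 1 - j))) Ew"
      unfolding Hsum S1 S2 S3 smul_add_left ..
    hence "HH c w = 0" by (simp only: coef smul_zero_left)
    thus ?thesis unfolding if_not_P[OF False] .
  qed
qed


theorem proposition3p6:
  fixes c :: "'a \<Rightarrow> 'a \<Rightarrow> ('a \<Rightarrow>\<^sub>0 'r::comm_ring_1)"
    and as :: "'a list"
  assumes Q_algebra: "\<forall>n::nat. n > 0 \<longrightarrow> (\<exists>x::'r. of_nat n * x = 1)"
    and comm: "\<And>a b. c a b = c b a"
    and assoc: "\<And>a b e. lin (\<lambda>d. c d e) (c a b) = lin (\<lambda>d. c a d) (c b e)"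
    and n_pos: "length as \<ge> 1"
  shows "(\<Sum>k = 0..length as.
            smul ((-1) ^ k)
              (harm c (Sop c [:0, 1:] (take k as)) (Sop c [:1, -1:] (rev (drop k as))))) = 0"
proof -
  have "as \<noteq> []" using n_pos by auto
  hence "HH c as = 0" using main[OF comm assoc, of as] by simp
  thus ?thesis unfolding HH_def .
qed

end
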